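(* Let $B$ be an abelian group equipped with an infinite family of group homomorphisms $r_v\colon B\to B_v$ (indexed by primes $v$ of good reduction) into finite abelian groups $B_v$. Fix an integer $n\ge 4$ and let $P\in B$ be a point of infinite order. For integers $x_1,\dots,x_n$ put $f(x_1,\dots,x_n)=(2x_1^2+x_2^2+x_3^2+x_4^2+\dots+x_n^2)P\in B$. Then $f(x_1,\dots,x_n)=0$ if and only if $(x_1,\dots,x_n)=(0,\dots,0)$; but for every prime $v$ of good reduction (i.e. every index $v$ of the family) there exist integers $x_1,\dots,x_n$ with $\gcd(x_1,\dots,x_n)=1$ such that $r_v\big((2x_1^2+x_2^2+x_3^2+x_4^2+\dots+x_n^2)P\big)=0$.
   Context: $B_v$ finite abelian groups, so every element of $B$ has finite order modulo $v$, i.e. $r_v(P)$ has finite order in $B_v$. In the intended applications (e.g. Mordell–Weil groups, $S$-units, odd $K$-groups over number fields) the maps $r_v$ are reduction maps at primes of good reduction. *)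

theory Defs
  imports "HOL-Algebra.Algebra"
begin

end

theory Submission
  imports Defs "HOL-Number_Theory.Number_Theory"
begin


lemma pigeon_sq:
  fixes p :: int
  assumes p: "Factorial_Ring.prime p" "odd p"
  shows "\<exists>u w. p dvd u^2 + w^2 + 2"
proof (rule ccontr)
  assume na: "\<not> ?thesis"
  define h where "h = (p - 1) div 2"
  have p2: "p = 2* h + 1" using p h_def by (simp add: odd_two_times_div_two_succ)
  have h0: "h \<ge> 0" using prime_gt_0_int[OF p(1)] p2 by linarith
  define A where "A = (\<lambda>x. x^2 mod p) ` {0..h}"
  define B where "B = (\<lambda>x. (-2 - x^2) mod p) ` {0..h}"
  have key: "x = y" if "x \<in> {0..h}" "y \<in> {0..h}" "[x^2 = y^2] (mod p)" for x y
  proof -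
    have "p dvd (x - y) * (x + y)" using that(3)
      by (simp add: cong_iff_dvd_diff power2_eq_square algebra_simps)
    hence "p dvd x - y \<or> p dvd x + y" using p(1) by (simp add: prime_dvd_mult_iff)
    thus ?thesis
    proof
      assume "p dvd x - y"
      moreover have "\<bar>x - y\<bar> < p" using that p2 by auto
      ultimately have "x - y = 0" using dvd_imp_le_int[of "x - y" p] p2 h0 by fastforce
      thus ?thesis by simp
    next
      assume "p dvd x + y"
      moreover have "0 \<le> x + y" "x + y < p" using that p2 by auto
      ultimately have "x + y = 0" using zdvd_not_zless by (metis order_le_less)
      thus ?thesis using that by auto
    qed
  qed
  have injA: "inj_on (\<lambda>x. x^2 mod p) {0..h}"
  proof (rule inj_onI)
    fix x y assume "x \<in> {0..h}" "y \<in> {0..h}" "x^2 mod p = y^2 mod p"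
    thus "x = y" by (intro key) (simp_all add: cong_def)
  qed
  have injB: "inj_on (\<lambda>x. (-2 - x^2) mod p) {0..h}"
  proof (rule inj_onI)
    fix x y assume "x \<in> {0..h}" "y \<in> {0..h}" "(-2 - x^2) mod p = (-2 - y^2) mod p"
    hence "[-2 - x^2 = -2 - y^2] (mod p)" by (simp add: cong_def)
    hence "p dvd (-2 - x^2) - (-2 - y^2)" by (simp add: cong_iff_dvd_diff)
    hence "p dvd -(x^2 - y^2)" by (simp add: algebra_simps)
    hence "p dvd x^2 - y^2" by (simp only: dvd_minus_iff)
    hence "[x^2 = y^2] (mod p)" by (simp add: cong_iff_dvd_diff)
    thus "x = y" using key \<open>x \<in> _\<close> \<open>y \<in> _\<close> by blast
  qed
  have cA: "card A = nat (h + 1)" unfolding A_def using injA h0 by (simp add: card_image)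
  have cB: "card B = nat (h + 1)" unfolding B_def using injB h0 by (simp add: card_image)
  have sub: "A \<union> B \<subseteq> {0..<p}" unfolding A_def B_def using prime_gt_0_int[OF p(1)] by auto
  have disj: "A \<inter> B = {}"
  proof (rule ccontr)
    assume "A \<inter> B \<noteq> {}"
    then obtain x y where "x^2 mod p = (-2 - y^2) mod p" unfolding A_def B_def by auto
    hence "[x^2 = -2 - y^2] (mod p)" by (simp add: cong_def)
    hence "p dvd x^2 + y^2 + 2"
      by (simp add: cong_iff_dvd_diff algebra_simps)
    thus False using na by blast
  qed
  have "card (A \<union> B) = card A + card B"
    using disj by (simp add: card_Un_disjoint A_def B_def)
  also have "\<dots> = nat p + 1" using cA cB p2 h0 by simp
  finally have "card (A \<union> B) > card {0..<p}" by simp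
  moreover have "card (A \<union> B) \<le> card {0..<p}" using sub by (intro card_mono) auto
  ultimately show False by simp
qed

lemma hensel_step:
  fixes M b K :: int
  assumes "M dvd b^2 + K" "coprime (2* b) M"
  shows "\<exists>b'. M^2 dvd b'^2 + K \<and> M dvd b' - b"
proof -
  obtain s where s: "[2* b* s = 1] (mod M)" using cong_solve_coprime_int[OF assms(2)] by blast
  obtain t where t: "b^2 + K = M* t" using assms(1) by blast
  obtain u where u: "1 - 2* b* s = M* u"
  proof -
    have "M dvd 1 - 2* b* s" using s by (simp add: cong_iff_dvd_diff dvd_diff_commute)
    thus ?thesis using that by blast
  qed
  define b' where "b' = b - (b^2 + K)* s"
  have "b'^2 + K = (b^2+K)*(1 - 2* b* s) + (b^2+K)^2* s^2"
    unfolding b'_def by (simp add: power2_eq_square algebra_simps)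
  also have "\<dots> = M^2 * (t* u + t^2* s^2)" unfolding t u by (simp add: power2_eq_square algebra_simps)
  finally have "M^2 dvd b'^2 + K" by simp
  moreover have "M dvd b' - b" unfolding b'_def t by simp
  ultimately show ?thesis by blast
qed

lemma hensel_iter:
  fixes p b K :: int
  assumes p: "Factorial_Ring.prime p" "odd p" and "p dvd b^2 + K" "\<not> p dvd b"
  shows "\<exists>b'. p^(2^k) dvd b'^2 + K \<and> \<not> p dvd b'"
proof (induction k)
  case 0
  then show ?case using assms by auto
next
  case (Suc k)
  then obtain cc where cc: "p^(2^k) dvd cc^2 + K" "\<not> p dvd cc" by blast
  have c2: "coprime 2 p" using prime_imp_coprime[of "2::int" p] p(2) by simp
  have "coprime cc p" using prime_imp_coprime[OF p(1) cc(2)] by (simp add: coprime_commute)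
  hence "coprime (2* cc) p" using c2 by simp
  hence cop: "coprime (2* cc) (p^(2^k))" by simp
  from hensel_step[OF cc(1) cop] obtain b' where
    b': "(p^(2^k))^2 dvd b'^2 + K" "p^(2^k) dvd b' - cc" by blast
  have "p dvd p^(2^k)" using p by simp
  hence "p dvd b' - cc" using b'(2) dvd_trans by blast
  hence "\<not> p dvd b'" using cc(2) dvd_diff[of p b' "b' - cc"] by auto
  moreover have "(p^(2^k))^2 = p^(2^Suc k)"
  proof -
    have "(2::nat)^Suc k = 2^k * 2" by simp
    hence "p^(2^Suc k) = p^(2^k * 2)" by (simp only:)
    also have "\<dots> = (p^(2^k))^2" by (rule power_mult)
    finally show ?thesis by simp
  qed
  ultimately show ?case using b'(1) by auto
qed

lemma two_adic: "\<exists>b::int. 2^(k+3) dvd b^2 + 7 \<and> odd b"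
proof (induction k)
  case 0
  show ?case by (rule exI[of _ 1]) simp
next
  case (Suc k)
  then obtain b :: int where b: "2^(k+3) dvd b^2 + 7" "odd b" by blast
  obtain q where q: "b^2 + 7 = 2^(k+3) * q" using b(1) by blast
  show ?case
  proof (cases "even q")
    case True
    then obtain q' where "q = 2* q'" by blast
    moreover have "(2::int)^(Suc k + 3) = 16*2^k" "(2::int)^(k+3) = 8*2^k" by (simp_all add: power_add)
    ultimately have "b^2 + 7 = 2^(Suc k+3) * q'" using q by (simp add: algebra_simps)
    hence "2^(Suc k+3) dvd b^2 + 7" by (rule dvdI)
    thus ?thesis using b(2) by blast
  next
    case False
    define W :: int where "W = 2^k"
    have q8: "b^2 + 7 = 8* W* q" using q unfolding W_def by (simp add: power_add)
    define b' where "b' = b + 4* W"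
    have "even (q + b)" using False b(2) by simp
    then obtain j where j: "q + b = 2* j" by (rule evenE)
    have "b'^2 + 7 = (b^2 + 7) + 8* W* b + 16* W* W"
      unfolding b'_def by (simp add: power2_eq_square algebra_simps)
    also have "\<dots> = 8* W*(q+b) + 16* W* W" using q8 by (simp add: algebra_simps)
    also have "\<dots> = 16* W*(j + W)" using j by (simp add: algebra_simps)
    finally have "b'^2 + 7 = 2^(Suc k+3) * (j + W)" unfolding W_def by (simp add: power_add)
    hence "2^(Suc k+3) dvd b'^2 + 7" by (rule dvdI)
    moreover have "odd b'" unfolding b'_def W_def using b(2) by simp
    ultimately show ?thesis by blast
  qed
qed

definition SQ :: "int \<Rightarrow> bool" where
  "SQ m \<longleftrightarrow> (\<exists>b c d. m dvd 2 + b^2 + c^2 + d^2)"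

lemma SQ_prime_power:
  fixes p :: int
  assumes p: "Factorial_Ring.prime p"
  shows "SQ (p^e)"
proof (cases "p = 2")
  case True
  obtain b :: int where b: "2^(e+3) dvd b^2 + 7" using two_adic by blast
  have "(2::int)^e dvd 2^(e+3)" by (simp add: le_imp_power_dvd)
  hence "2^e dvd 2 + b^2 + 1^2 + 2^2" using b dvd_trans by (simp add: algebra_simps)
  thus ?thesis unfolding SQ_def True by blast
next
  case False
  have odd: "odd p"
  proof
    assume "even p"
    hence "2 = p" using primes_dvd_imp_eq[of 2 p] p by simp
    thus False using False by simp
  qed
  obtain u w where uw: "p dvd u^2 + w^2 + 2" using pigeon_sq[OF p odd] by blast
  have "\<not> p dvd u \<or> \<not> p dvd w"
  proof (rule ccontr)
    assume "\<not> ?thesis"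
    hence "p dvd u^2" "p dvd w^2" by (auto simp: power2_eq_square)
    hence "p dvd (u^2 + w^2 + 2) - u^2 - w^2" using uw by (intro dvd_diff)
    hence "p dvd 2" by simp
    hence "p = 2" using primes_dvd_imp_eq[of p 2] p by simp
    thus False using odd by simp
  qed
  then obtain y z where yz: "p dvd y^2 + (z^2 + 2)" "\<not> p dvd y"
  proof
    assume a: "\<not> p dvd u"
    have eq: "u^2 + (w^2 + 2) = u^2 + w^2 + 2" by (simp only: add.assoc)
    have "p dvd u^2 + (w^2 + 2)" by (subst eq) (rule uw)
    thus ?thesis using a by (rule that)
  next
    assume a: "\<not> p dvd w"
    have eq: "w^2 + (u^2 + 2) = u^2 + w^2 + 2" by simp
    have "p dvd w^2 + (u^2 + 2)" by (subst eq) (rule uw)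
    thus ?thesis using a by (rule that)
  qed
  obtain b where b: "p^(2^e) dvd b^2 + (z^2 + 2)"
    using hensel_iter[OF p odd yz, where k=e] by auto
  have "p^e dvd p^(2^e)" by (rule le_imp_power_dvd) (simp add: less_imp_le less_exp)
  hence "p^e dvd b^2 + (z^2 + 2)" using b by (rule dvd_trans)
  moreover have "b^2 + (z^2 + 2) = 2 + b^2 + z^2 + 0^2" by simp
  ultimately have "p^e dvd 2 + b^2 + z^2 + 0^2" by simp
  thus ?thesis unfolding SQ_def by (intro exI[of _ b] exI[of _ z] exI[of _ 0])
qed

lemma SQ_mult:
  fixes m1 m2 :: int
  assumes "coprime m1 m2" "SQ m1" "SQ m2"
  shows "SQ (m1 * m2)"
proof -
  obtain b1 c1 d1 where 1: "m1 dvd 2 + b1^2 + c1^2 + d1^2" using assms(2) unfolding SQ_def by blast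
  obtain b2 c2 d2 where 2: "m2 dvd 2 + b2^2 + c2^2 + d2^2" using assms(3) unfolding SQ_def by blast
  obtain b where b: "[b = b1] (mod m1)" "[b = b2] (mod m2)" using binary_chinese_remainder_int[OF assms(1)] by blast
  obtain c where c: "[c = c1] (mod m1)" "[c = c2] (mod m2)" using binary_chinese_remainder_int[OF assms(1)] by blast
  obtain d where d: "[d = d1] (mod m1)" "[d = d2] (mod m2)" using binary_chinese_remainder_int[OF assms(1)] by blast
  have "[2 + b^2 + c^2 + d^2 = 2 + b1^2 + c1^2 + d1^2] (mod m1)"
    using b(1) c(1) d(1) by (intro cong_add cong_pow cong_refl)
  hence A: "m1 dvd 2 + b^2 + c^2 + d^2" using 1 by (simp add: cong_dvd_iff)
  have "[2 + b^2 + c^2 + d^2 = 2 + b2^2 + c2^2 + d2^2] (mod m2)"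
    using b(2) c(2) d(2) by (intro cong_add cong_pow cong_refl)
  hence B: "m2 dvd 2 + b^2 + c^2 + d^2" using 2 by (simp add: cong_dvd_iff)
  have "m1 * m2 dvd 2 + b^2 + c^2 + d^2" using divides_mult[OF A B assms(1)] .
  thus ?thesis unfolding SQ_def by blast
qed

lemma SQ_all_nat: "m > 0 \<Longrightarrow> SQ (int m)"
proof (induction m rule: less_induct)
  case (less m)
  show ?case
  proof (cases "m \<le> 1")
    case True
    hence "m = 1" using less.prems by simp
    then show ?thesis unfolding SQ_def by (auto intro: exI[of _ 0])
  next
    case False
    then obtain p :: int where p: "Factorial_Ring.prime p" "p dvd int m"
      using prime_divisor_exists[of "int m"] by simp blast
    have mne: "int m \<noteq> 0" using False by simp
    have nu: "\<not> is_unit p" using p(1) not_prime_unit by blast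
    obtain y where y: "int m = p ^ multiplicity p (int m) * y" "\<not> p dvd y"
      by (rule multiplicity_decompose'[OF mne nu])
    define e where "e = multiplicity p (int m)"
    have "p^1 dvd int m" using p by simp
    hence e1: "1 \<le> e" unfolding e_def using power_dvd_iff_le_multiplicity[OF mne nu] by blast
    have pg: "p \<ge> 2" using p(1) prime_ge_2_int by blast
    have "p^1 \<le> p^e" using power_increasing[OF e1, of p] pg by simp
    hence pe: "p^e \<ge> 2" using pg by simp
    have my: "int m = p^e * y" using y(1) unfolding e_def .
    have "0 < p^e * y" using my False by simp
    hence ypos: "y > 0" using zero_less_mult_pos[of "p^e" y] pe by simp
    have "y * 1 < y * p^e" using ypos pe by (intro mult_strict_left_mono) auto
    hence "y < int m" using my by (simp add: mult.commute)
    hence IH: "SQ (int (nat y))" using less ypos by (intro less.IH) linarith+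
    hence SQy: "SQ y" using ypos by simp
    have cop: "coprime (p^e) y" using y(2) p(1)
      by (simp add: prime_imp_coprime coprime_commute)
    have "SQ (p^e * y)" by (rule SQ_mult[OF cop SQ_prime_power[OF p(1)] SQy])
    thus ?thesis using my by simp
  qed
qed

lemma SQ_all: "m > 0 \<Longrightarrow> \<exists>b c d. m dvd 2 + b^2 + c^2 + (d::int)^2"
proof -
  assume "m > 0"
  hence "SQ (int (nat m))" by (intro SQ_all_nat) simp
  thus ?thesis using \<open>m > 0\<close> unfolding SQ_def by simp
qed


theorem proposition4p1:
  fixes B :: "('b, 'm) monoid_scheme"
    and Bv :: "'v \<Rightarrow> ('c, 'n) monoid_scheme"
    and r :: "'v \<Rightarrow> 'b \<Rightarrow> 'c"
    and V :: "'v set"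
    and n :: nat
    and P :: 'b
  assumes "comm_group B"
    and "infinite V"
    and "\<And>v. v \<in> V \<Longrightarrow> comm_group (Bv v)"
    and "\<And>v. v \<in> V \<Longrightarrow> finite (carrier (Bv v))"
    and "\<And>v. v \<in> V \<Longrightarrow> r v \<in> hom B (Bv v)"
    and "n \<ge> 4"
    and "P \<in> carrier B"
    and "group.ord B P = 0"
  shows "(\<forall>x :: nat \<Rightarrow> int.
            P [^]\<^bsub>B\<^esub> (2 * (x 0)\<^sup>2 + (\<Sum>i\<in>{1..<n}. (x i)\<^sup>2)) = \<one>\<^bsub>B\<^esub>
            \<longleftrightarrow> (\<forall>i<n. x i = 0))
       \<and> (\<forall>v\<in>V. \<exists>x :: nat \<Rightarrow> int. Gcd (x ` {..<n}) = 1 \<and>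
            r v (P [^]\<^bsub>B\<^esub> (2 * (x 0)\<^sup>2 + (\<Sum>i\<in>{1..<n}. (x i)\<^sup>2))) = \<one>\<^bsub>Bv v\<^esub>)"
proof -
  interpret G: comm_group B by fact
  have part1: "P [^]\<^bsub>B\<^esub> (2 * (x 0)\<^sup>2 + (\<Sum>i\<in>{1..<n}. (x i)\<^sup>2)) = \<one>\<^bsub>B\<^esub>
            \<longleftrightarrow> (\<forall>i<n. x i = 0)" for x :: "nat \<Rightarrow> int"
  proof -
    have "P [^]\<^bsub>B\<^esub> (2 * (x 0)\<^sup>2 + (\<Sum>i\<in>{1..<n}. (x i)\<^sup>2)) = \<one>\<^bsub>B\<^esub>
       \<longleftrightarrow> 2 * (x 0)\<^sup>2 + (\<Sum>i\<in>{1..<n}. (x i)\<^sup>2) = 0"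
      using G.int_pow_eq_id[OF assms(7)] assms(8) by simp
    also have "\<dots> \<longleftrightarrow> (\<forall>i<n. x i = 0)"
    proof
      assume h: "2 * (x 0)\<^sup>2 + (\<Sum>i\<in>{1..<n}. (x i)\<^sup>2) = 0"
      have s0: "(\<Sum>i\<in>{1..<n}. (x i)\<^sup>2) \<ge> 0" by (intro sum_nonneg) simp
      have a0: "(x 0)\<^sup>2 \<ge> 0" by simp
      have "(x 0)\<^sup>2 = 0" "(\<Sum>i\<in>{1..<n}. (x i)\<^sup>2) = 0" using h s0 a0 by linarith+
      hence x0: "x 0 = 0" and xs: "\<forall>i\<in>{1..<n}. (x i)\<^sup>2 = 0"
        using sum_nonneg_eq_0_iff[of "{1..<n}" "\<lambda>i. (x i)\<^sup>2"] by auto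
      show "\<forall>i<n. x i = 0"
      proof (intro allI impI)
        fix i assume "i < n"
        show "x i = 0"
        proof (cases "i = 0")
          case True thus ?thesis using x0 by simp
        next
          case False thus ?thesis using xs \<open>i < n\<close> by auto
        qed
      qed
    next
      assume "\<forall>i<n. x i = 0"
      moreover have "x 0 = 0" using calculation assms(6) by simp
      ultimately show "2 * (x 0)\<^sup>2 + (\<Sum>i\<in>{1..<n}. (x i)\<^sup>2) = 0" by simp
    qed
    finally show ?thesis .
  qed
  have part2: "\<exists>x :: nat \<Rightarrow> int. Gcd (x ` {..<n}) = 1 \<and>
            r v (P [^]\<^bsub>B\<^esub> (2 * (x 0)\<^sup>2 + (\<Sum>i\<in>{1..<n}. (x i)\<^sup>2))) = \<one>\<^bsub>Bv v\<^esub>"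
    if v: "v \<in> V" for v
  proof -
    interpret H: comm_group "Bv v" using assms(3)[OF v] .
    have hom: "r v \<in> hom B (Bv v)" using assms(5)[OF v] .
    have rP: "r v P \<in> carrier (Bv v)" using hom_in_carrier[OF hom assms(7)] .
    have o1: "H.ord (r v P) \<ge> 1" using H.ord_ge_1[OF assms(4)[OF v] rP] .
    obtain b c d where bcd: "int (H.ord (r v P)) dvd 2 + b^2 + c^2 + d^2"
      using SQ_all[of "int (H.ord (r v P))"] o1 by auto
    define x :: "nat \<Rightarrow> int" where
      "x = (\<lambda>i. if i = 0 then 1 else if i = 1 then b else if i = 2 then c else if i = 3 then d else 0)"
    have split: "{1..<n} = {1,2,3} \<union> {4..<n}" using assms(6) by auto
    have "(\<Sum>i\<in>{1..<n}. (x i)\<^sup>2) = (\<Sum>i\<in>{1,2,3}. (x i)\<^sup>2) + (\<Sum>i\<in>{4..<n}. (x i)\<^sup>2)"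
      unfolding split by (rule sum.union_disjoint) auto
    also have "(\<Sum>i\<in>{4..<n}. (x i)\<^sup>2) = 0" by (intro sum.neutral) (auto simp: x_def)
    also have "(\<Sum>i\<in>{1,2,3}. (x i)\<^sup>2) = b^2 + c^2 + d^2" by (simp add: x_def)
    finally have Qx: "2 * (x 0)\<^sup>2 + (\<Sum>i\<in>{1..<n}. (x i)\<^sup>2) = 2 + b^2 + c^2 + d^2"
      by (simp add: x_def)
    have "r v (P [^]\<^bsub>B\<^esub> (2 * (x 0)\<^sup>2 + (\<Sum>i\<in>{1..<n}. (x i)\<^sup>2)))
        = r v P [^]\<^bsub>Bv v\<^esub> (2 + b^2 + c^2 + d^2)"
      unfolding Qx using hom_int_pow[OF hom assms(7) G.is_group H.is_group] .
    also have "\<dots> = \<one>\<^bsub>Bv v\<^esub>" using H.int_pow_eq_id[OF rP] bcd by simp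
    finally have R: "r v (P [^]\<^bsub>B\<^esub> (2 * (x 0)\<^sup>2 + (\<Sum>i\<in>{1..<n}. (x i)\<^sup>2))) = \<one>\<^bsub>Bv v\<^esub>" .
    have "1 \<in> x ` {..<n}" using assms(6) unfolding x_def by (auto intro!: image_eqI[of _ _ 0])
    hence "Gcd (x ` {..<n}) = 1" by (intro Gcd_eq_1_I[of 1]) auto
    thus ?thesis using R by blast
  qed
  show ?thesis using part1 part2 by blast
qed

end
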